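(* Let $a_{01}^0(u)=64u^3\sin2u+48u^2\cos2u-44u\sin2u-4u\cos u\sin2u+3\cos2u-3\cos6u$ and let $F[a_{01}^0]=\inf\{u>0:a_{01}^0(u)=0\}$. Then $F[a_{01}^0]\in(\frac34\pi,\pi)$, and $a_{01}^0(u)<0$ for all $u\in(0,F[a_{01}^0])$. *)

theory Defs
  imports Complex_Main
begin

definition a01 :: "real \<Rightarrow> real" where
  "a01 u = 64 * u^3 * sin (2*u) + 48 * u^2 * cos (2*u) - 44 * u * sin (2*u)
           - 4 * u * cos u * sin (2*u) + 3 * cos (2*u) - 3 * cos (6*u)"

definition first_zero :: "(real \<Rightarrow> real) \<Rightarrow> real" where
  "first_zero f = Inf {u. u > 0 \<and> f u = 0}"

end

theory Submission
  imports Defs "HOL-Analysis.Analysis"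
begin


fun hor :: "real list \<Rightarrow> real \<Rightarrow> real" where
  "hor [] x = 0"
| "hor (c # cs) x = c + x * hor cs x"

lemma hor_append: "hor (xs @ ys) x = hor xs x + x ^ length xs * hor ys x"
  by (induction xs) (auto simp: algebra_simps)

lemma sum_hor: "(\<Sum>m<n. f m * x ^ m) = hor (map f [0..<n]) x"
  by (induction n) (auto simp: hor_append)

fun hb :: "real \<Rightarrow> real \<Rightarrow> real list \<Rightarrow> real list \<Rightarrow> bool" where
  "hb l r [q] [U] = (q \<le> U)"
| "hb l r (q # q' # qs) (U # V # Us) =
     (q + (if 0 \<le> V then r * V else l * V) \<le> U \<and> hb l r (q' # qs) (V # Us))"
| "hb l r _ _ = False"

lemma hb_sound: "hb l r qs Us \<Longrightarrow> 0 \<le> l \<Longrightarrow> l \<le> x \<Longrightarrow> x \<le> r \<Longrightarrow> hor qs x \<le> hd Us"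
proof (induction l r qs Us rule: hb.induct)
  case (2 l r q q' qs U V Us)
  then have IH: "hor (q' # qs) x \<le> V" by auto
  have x0: "0 \<le> x" using 2 by auto
  have "x * hor (q' # qs) x \<le> x * V" using IH x0 by (rule mult_left_mono)
  also have "x * V \<le> (if 0 \<le> V then r * V else l * V)"
    using 2(3-) by (auto intro: mult_right_mono mult_right_mono_neg)
  finally show ?case using 2 by auto
qed auto

fun chk :: "real list \<Rightarrow> real list \<Rightarrow> real list list \<Rightarrow> bool" where
  "chk P (l # r # bs) (U # Us) = (l \<le> r \<and> hb l r P U \<and> hd U < 0 \<and> chk P (r # bs) Us)"
| "chk P [r] [] = True"
| "chk P _ _ = False"

lemma chk_sound: "chk P bs Us \<Longrightarrow> 0 \<le> hd bs \<Longrightarrow> hd bs \<le> x \<Longrightarrow> x \<le> last bs \<Longrightarrow> Us \<noteq> [] \<Longrightarrow> hor P x < 0"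
proof (induction P bs Us rule: chk.induct)
  case (1 P l r bs U Us)
  show ?case
  proof (cases "x \<le> r")
    case True
    then have "hor P x \<le> hd U" using 1 by (intro hb_sound[of l r]) auto
    then show ?thesis using 1 by auto
  next
    case False
    then have "bs \<noteq> []" using 1 by auto
    then have "Us \<noteq> []" using 1 by (cases bs; cases Us) auto
    then show ?thesis using 1 False by auto
  qed
qed auto



fun padd :: "real list \<Rightarrow> real list \<Rightarrow> real list" where
  "padd [] ys = ys"
| "padd xs [] = xs"
| "padd (x # xs) (y # ys) = (x + y) # padd xs ys"

lemma hor_padd: "hor (padd xs ys) x = hor xs x + hor ys x"
  by (induction xs ys rule: padd.induct) (auto simp: algebra_simps)

definition sc :: "real \<Rightarrow> real list \<Rightarrow> real list" where "sc c xs = map ((*) c) xs"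
lemma hor_sc: "hor (sc c xs) x = c * hor xs x"
  unfolding sc_def by (induction xs) (auto simp: algebra_simps)

definition shl :: "nat \<Rightarrow> real list \<Rightarrow> real list" where "shl j xs = replicate j 0 @ xs"
lemma hor_shl: "hor (shl j xs) x = x ^ j * hor xs x"
proof -
  have "hor (replicate j 0) x = 0" by (induction j) auto
  then show ?thesis unfolding shl_def by (simp add: hor_append)
qed

definition tsin :: "real \<Rightarrow> nat \<Rightarrow> real list" where
  "tsin k n = map (\<lambda>m. sin_coeff m * k ^ m) [0..<n]"
definition tcos :: "real \<Rightarrow> nat \<Rightarrow> real list" where
  "tcos k n = map (\<lambda>m. cos_coeff m * k ^ m) [0..<n]"

lemma hor_tsin: "hor (tsin k n) x = (\<Sum>m<n. sin_coeff m * (k * x) ^ m)"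
  unfolding tsin_def sum_hor[symmetric] by (simp add: power_mult_distrib mult.assoc)
lemma hor_tcos: "hor (tcos k n) x = (\<Sum>m<n. cos_coeff m * (k * x) ^ m)"
  unfolding tcos_def sum_hor[symmetric] by (simp add: power_mult_distrib mult.assoc)

fun ple :: "real list \<Rightarrow> real list \<Rightarrow> bool" where
  "ple [] [] = True"
| "ple (x # xs) [] = (x \<le> 0 \<and> ple xs [])"
| "ple [] (y # ys) = (0 \<le> y \<and> ple [] ys)"
| "ple (x # xs) (y # ys) = (x \<le> y \<and> ple xs ys)"

lemma ple_sound: "ple xs ys \<Longrightarrow> 0 \<le> x \<Longrightarrow> hor xs x \<le> hor ys x"
proof (induction xs ys rule: ple.induct)
  case (2 a xs)
  then have "x * hor xs x \<le> x * hor [] x" by (intro mult_left_mono) auto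
  then show ?case using 2 by simp
next
  case (3 b ys)
  then have "x * hor [] x \<le> x * hor ys x" by (intro mult_left_mono) auto
  then show ?case using 3 by simp
next
  case (4 a xs b ys)
  then have "x * hor xs x \<le> x * hor ys x" by (intro mult_left_mono) auto
  then show ?case using 4 by simp
qed auto

fun spread :: "real list \<Rightarrow> real list" where
  "spread [] = []"
| "spread (c # cs) = c # 0 # spread cs"
lemma hor_spread: "hor (spread cs) x = hor cs (x^2)"
  by (induction cs) (auto simp: algebra_simps power2_eq_square)

fun scl :: "real \<Rightarrow> real list \<Rightarrow> real list" where
  "scl c [] = []"
| "scl c (a # as) = a # map ((*) c) (scl c as)"
lemma hor_map_mult: "hor (map ((*) c) xs) x = c * hor xs x"
  by (induction xs) (auto simp: algebra_simps)
lemma hor_scl: "hor (scl c as) x = hor as (c * x)"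
  by (induction as) (auto simp: hor_map_mult algebra_simps)



lemma sin_T: "p * sin x \<le> p * (\<Sum>m<n. sin_coeff m * x ^ m) + \<bar>p\<bar> * (\<bar>x\<bar> ^ n / fact n)"
proof -
  have b: "\<bar>sin x - (\<Sum>m<n. sin_coeff m * x ^ m)\<bar> \<le> \<bar>x\<bar> ^ n / fact n"
    using Maclaurin_sin_bound[of x n] by (simp add: divide_inverse mult.commute)
  have "p * (sin x - (\<Sum>m<n. sin_coeff m * x ^ m)) \<le> \<bar>p\<bar> * \<bar>sin x - (\<Sum>m<n. sin_coeff m * x ^ m)\<bar>"
    by (metis abs_ge_self abs_mult)
  also have "\<dots> \<le> \<bar>p\<bar> * (\<bar>x\<bar> ^ n / fact n)" using b by (intro mult_left_mono) auto
  finally show ?thesis by (simp add: algebra_simps)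
qed

lemma cos_T: assumes "0 < x" "0 < n"
  shows "p * cos x \<le> p * (\<Sum>m<n. cos_coeff m * x ^ m) + \<bar>p\<bar> * (x ^ n / fact n)"
proof -
  obtain t where t: "cos x = (\<Sum>m<n. cos_coeff m * x ^ m) + (cos (t + 1/2 * real n * pi) / fact n) * x ^ n"
    using Maclaurin_cos_expansion2[OF assms] by blast
  have b: "\<bar>cos x - (\<Sum>m<n. cos_coeff m * x ^ m)\<bar> \<le> x ^ n / fact n"
  proof -
    have "\<bar>cos x - (\<Sum>m<n. cos_coeff m * x ^ m)\<bar> = \<bar>cos (t + 1/2 * real n * pi)\<bar> * (x ^ n / fact n)"
      using t assms by (simp add: abs_mult)
    also have "\<dots> \<le> 1 * (x ^ n / fact n)" using assms by (intro mult_right_mono) auto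
    finally show ?thesis by simp
  qed
  have "p * (cos x - (\<Sum>m<n. cos_coeff m * x ^ m)) \<le> \<bar>p\<bar> * \<bar>cos x - (\<Sum>m<n. cos_coeff m * x ^ m)\<bar>"
    by (metis abs_ge_self abs_mult)
  also have "\<dots> \<le> \<bar>p\<bar> * (x ^ n / fact n)" using b by (intro mult_left_mono) auto
  finally show ?thesis by (simp add: algebra_simps)
qed

lemma a01_alt: "a01 u = (64*u^3 - 44*u) * sin (2*u) + 48*u^2 * cos (2*u) + (-2*u) * sin (3*u)
   + (-2*u) * sin u + 3 * cos (2*u) + (-3) * cos (6*u)"
proof -
  have "sin (3*u) = sin (2*u + u)" by simp
  also have "\<dots> = sin (2*u) * cos u + cos (2*u) * sin u" by (rule sin_add)
  finally have s3: "sin (3*u) = sin (2*u) * cos u + cos (2*u) * sin u" .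
  have "sin u = sin (2*u - u)" by simp
  also have "\<dots> = sin (2*u) * cos u - cos (2*u) * sin u" by (rule sin_diff)
  finally have s1: "sin u = sin (2*u) * cos u - cos (2*u) * sin u" .
  have key: "sin (3*u) = 2 * (sin (2*u) * cos u) - sin u" using s3 s1 by linarith
  show ?thesis unfolding a01_def key by (simp add: algebra_simps)
qed

definition Gl :: "real list" where "Gl = padd (sc 64 (shl 3 (tsin 2 31))) (padd (sc (-44) (shl 1 (tsin 2 31)))
  (padd (sc 48 (shl 2 (tcos 2 30))) (padd (sc (-2) (shl 1 (tsin 3 31))) (padd (sc (-2) (shl 1 (tsin 1 31)))
  (padd (sc 3 (tcos 2 30)) (padd (sc (-3) (tcos 6 30))
  (padd (shl 32 [44*2^31/fact 31, 0, 64*2^31/fact 31])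
  (padd (shl 32 [48 * 2^30/fact 30 + 2*3^31/fact 31 + 2/fact 31])
  (shl 30 [3*2^30/fact 30 + 3*6^30/fact 30])))))))))"

lemma a01_le_Gl: assumes "0 < u" shows "a01 u \<le> hor Gl u"
proof -
  let ?S = "\<lambda>k. (\<Sum>m<31. sin_coeff m * (k*u) ^ m)"
  let ?C = "\<lambda>k. (\<Sum>m<30. cos_coeff m * (k*u) ^ m)"
  have u0: "0 \<le> u" using assms by simp
  have ab: "\<bar>64*u^3 - 44*u\<bar> \<le> 64*u^3 + 44*u" using u0 by (simp add: abs_le_iff)
  have e1: "\<bar>64*u^3 - 44*u\<bar> * (\<bar>2*u\<bar> ^ 31 / fact 31) \<le> (64*u^3 + 44*u) * ((2*u) ^ 31 / fact 31)"
  proof -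
    have abs2: "\<bar>2*u\<bar> = 2*u" using u0 by simp
    show ?thesis unfolding abs2 by (rule mult_right_mono[OF ab]) (simp add: u0)
  qed
  have t1: "(64*u^3 - 44*u) * sin (2*u) \<le> (64*u^3 - 44*u) * ?S 2 + (64*u^3 + 44*u) * ((2*u) ^ 31 / fact 31)"
    using sin_T[of "64*u^3 - 44*u" "2*u" 31] e1 by linarith
  have t2: "48*u^2 * cos (2*u) \<le> 48*u^2 * ?C 2 + 48*u^2 * ((2*u)^30 / fact 30)"
    using cos_T[of "2*u" 30 "48*u^2"] assms by simp
  have t3: "(-2*u) * sin (3*u) \<le> (-2*u) * ?S 3 + 2*u * ((3*u)^31 / fact 31)"
    using sin_T[of "-2*u" "3*u" 31] u0 by simp
  have t4: "(-2*u) * sin u \<le> (-2*u) * ?S 1 + 2*u * (u^31 / fact 31)"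
    using sin_T[of "-2*u" "u" 31] u0 by simp
  have t5: "3 * cos (2*u) \<le> 3 * ?C 2 + 3 * ((2*u)^30 / fact 30)"
    using cos_T[of "2*u" 30 3] assms by simp
  have t6: "(-3) * cos (6*u) \<le> (-3) * ?C 6 + 3 * ((6*u)^30 / fact 30)"
    using cos_T[of "6*u" 30 "-3"] assms by simp
  have eq: "hor Gl u = (64*u^3 - 44*u) * ?S 2 + (64*u^3 + 44*u) * ((2*u) ^ 31 / fact 31)
     + (48*u^2 * ?C 2 + 48*u^2 * ((2*u)^30 / fact 30))
     + ((-2*u) * ?S 3 + 2*u * ((3*u)^31 / fact 31))
     + ((-2*u) * ?S 1 + 2*u * (u^31 / fact 31))
     + (3 * ?C 2 + 3 * ((2*u)^30 / fact 30))
     + ((-3) * ?C 6 + 3 * ((6*u)^30 / fact 30))"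
    unfolding Gl_def
    apply (simp only: hor_padd hor_sc hor_shl hor_tsin hor_tcos hor.simps)
    apply (simp add: algebra_simps power_mult_distrib)
    apply (simp add: field_simps flip: power_Suc)
    done
  show ?thesis unfolding a01_alt eq using t1 t2 t3 t4 t5 t6 by linarith
qed


definition Hr :: "real list" where "Hr = [(-60), 320, (-36099413/50000), (40681831/50000), (-58176761/100000), (5922503/20000), (-569149/5000), (3428961/100000), (-831643/100000), (82949/50000), (-27697/100000), (491/12500), (-239/50000), (51/100000), (1/100000), (1/100000)]"

definition bps :: "real list" where "bps = [0, (1/8), (3/16), (1/4), (9/32), (5/16), (11/32), (3/8), (13/32), (27/64), (7/16), (29/64), (15/32), (31/64), (1/2), (33/64), (17/32), (35/64), (9/16), (37/64), (19/32), (39/64), (5/8), (41/64), (21/32), (43/64), (11/16), (45/64), (23/32), (47/64), (3/4), (49/64), (25/32), (51/64), (13/16), (53/64), (27/32), (55/64), (7/8), (57/64), (29/32), (59/64), (15/16), (61/64), (31/32), (63/64), 1]"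

definition certs :: "real list list" where "certs = [[(-20), 320, (-3876773/6250), (40681831/50000), (-13618799/25000), (5922503/20000), (-10954359/100000), (3428961/100000), (-162181/20000), (82949/50000), (-13603/50000), (491/12500), (-471/100000), (13/25000), (1/50000), (1/100000)],
  [(-27273/2000), (6181799/25000), (-58182433/100000), (74754091/100000), (-26438287/50000), (14133831/50000), (-10758827/100000), (665763/20000), (-801169/100000), (162527/100000), (-26971/100000), (387/10000), (-117/25000), (13/25000), (1/50000), (1/100000)],
  [(-54349/10000), (10913019/50000), (-54261133/100000), (71750769/100000), (-10253753/20000), (1726999/6250), (-10562837/100000), (328057/10000), (-791421/100000), (32177/20000), (-1671/6250), (3841/100000), (-93/20000), (13/25000), (1/50000), (1/100000)],
  [(-179391/25000), (18781993/100000), (-52872031/100000), (68717491/100000), (-50584687/100000), (13497019/50000), (-1047391/10000), (3232247/100000), (-98357/12500), (79621/50000), (-832/3125), (3813/100000), (-463/100000), (13/25000), (1/50000), (1/100000)],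
  [(-123961/25000), (17613297/100000), (-2046109/4000), (67347521/100000), (-49835169/100000), (6673273/25000), (-10380171/100000), (802247/25000), (-782129/100000), (158443/100000), (-26509/100000), (3799/100000), (-461/100000), (13/25000), (1/50000), (1/100000)],
  [(-317893/100000), (16529763/100000), (-49504759/100000), (33009551/50000), (-1534456/3125), (26397581/100000), (-10287789/100000), (398251/12500), (-15549/2000), (3153/2000), (-5279/20000), (757/20000), (-23/5000), (13/25000), (1/50000), (1/100000)],
  [(-88901/50000), (776293/5000), (-47924773/100000), (32365403/50000), (-48386491/100000), (13053693/50000), (-509837/5000), (632661/20000), (-772819/100000), (4902/3125), (-13141/50000), (3771/100000), (-229/50000), (13/25000), (1/50000), (1/100000)],
  [(-35103/50000), (7298207/50000), (-9281913/20000), (63481257/100000), (-23843207/50000), (25822391/100000), (-10106999/100000), (1570437/50000), (-768233/100000), (31217/20000), (-2617/10000), (3757/100000), (-57/12500), (13/25000), (1/50000), (1/100000)],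
  [(-383597/100000), (2662591/20000), (-287493/625), (31051787/50000), (-47409449/100000), (6380629/25000), (-10067691/100000), (3117721/100000), (-76613/10000), (19411/12500), (-26117/100000), (3743/100000), (-57/12500), (13/25000), (1/50000), (1/100000)],
  [(-179613/50000), (3223299/25000), (-45290203/100000), (3844089/6250), (-2353569/5000), (12691863/50000), (-10023797/100000), (3106703/100000), (-23871/3125), (19363/12500), (-13031/50000), (3737/100000), (-91/20000), (13/25000), (1/50000), (1/100000)],
  [(-340843/100000), (3122293/25000), (-44596179/100000), (30458093/50000), (-46737089/100000), (25246171/100000), (-9980217/100000), (3095751/100000), (-6093/800), (154521/100000), (-13003/50000), (373/10000), (-227/50000), (13/25000), (1/50000), (1/100000)],
  [(-327959/100000), (12100353/100000), (-43916463/100000), (30167853/50000), (-1856261/4000), (5021967/20000), (-198739/2000), (3084863/100000), (-75939/10000), (154139/100000), (-25951/100000), (3723/100000), (-453/100000), (13/25000), (1/50000), (1/100000)],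
  [(-320109/100000), (5863113/50000), (-43250719/100000), (59763833/100000), (-46079637/100000), (24974707/100000), (-9893991/100000), (76851/2500), (-151433/20000), (961/625), (-3237/12500), (3717/100000), (-113/25000), (13/25000), (1/50000), (1/100000)],
  [(-79213/25000), (1420787/12500), (-5324827/12500), (59200419/100000), (-22878187/50000), (24840773/100000), (-9851339/100000), (1531641/50000), (-94369/12500), (153381/100000), (-12921/50000), (371/10000), (-113/25000), (13/25000), (1/50000), (1/100000)],
  [(-317769/100000), (2755021/25000), (-41959833/100000), (58645319/100000), (-45436687/100000), (24708021/100000), (-9808989/100000), (3052587/100000), (-752749/100000), (30601/20000), (-25787/100000), (3703/100000), (-9/2000), (53/100000), (1/50000), (1/100000)],
  [(-322463/100000), (1335891/12500), (-5166757/12500), (5809839/10000), (-2820033/6250), (24576437/100000), (-9766941/100000), (608391/20000), (-375279/50000), (15263/10000), (-6433/25000), (3697/100000), (-449/100000), (53/100000), (1/50000), (1/100000)],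
  [(-330557/100000), (10366981/100000), (-20360489/50000), (14389873/25000), (-896157/2000), (3055751/12500), (-972519/10000), (1515693/50000), (-748377/100000), (152257/100000), (-25679/100000), (369/10000), (-449/100000), (53/100000), (1/50000), (1/100000)],
  [(-341693/100000), (10059211/100000), (-40120301/100000), (7128561/12500), (-11124651/25000), (24316723/100000), (-1936747/20000), (37761/1250), (-746207/100000), (30377/20000), (-41/160), (3683/100000), (-14/3125), (53/100000), (1/50000), (1/100000)],
  [(-355533/100000), (4881701/50000), (-39531731/100000), (14126311/25000), (-5524093/12500), (24188569/100000), (-2410643/25000), (1505217/50000), (-46503/6250), (30303/20000), (-25571/100000), (3677/100000), (-447/100000), (53/100000), (1/50000), (1/100000)],
  [(-185877/50000), (189583/2000), (-7790997/20000), (27994813/50000), (-1755609/4000), (24061533/100000), (-9601699/100000), (3000051/100000), (-7419/1000), (75573/50000), (-25517/100000), (3671/100000), (-223/50000), (53/100000), (1/50000), (1/100000)],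
  [(-97513/25000), (9206067/100000), (-38389783/100000), (11096301/20000), (-21795501/50000), (5983901/25000), (-4780557/50000), (93429/3125), (-369881/50000), (150779/100000), (-3183/12500), (229/6250), (-89/20000), (53/100000), (1/50000), (1/100000)],
  [(-410139/100000), (8943777/100000), (-18917927/50000), (27490377/50000), (-43295029/100000), (2381077/10000), (-9520813/100000), (1489733/50000), (-368817/50000), (75207/50000), (-2541/10000), (1829/50000), (-111/25000), (53/100000), (1/50000), (1/100000)],
  [(-21587/5000), (8691917/100000), (-37292933/100000), (54487247/100000), (-5375283/12500), (23687019/100000), (-1896159/20000), (2969263/100000), (-735517/100000), (3001/2000), (-12679/50000), (3651/100000), (-111/25000), (53/100000), (1/50000), (1/100000)],
  [(-113649/25000), (8450139/100000), (-36760759/100000), (54000863/100000), (-42712663/100000), (23564339/100000), (-295033/3125), (2959121/100000), (-73341/10000), (18711/12500), (-3163/12500), (729/20000), (-443/100000), (53/100000), (1/50000), (1/100000)],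
  [(-239231/50000), (8218103/100000), (-18119541/50000), (53521479/100000), (-5303273/12500), (23442719/100000), (-1880319/20000), (2949037/100000), (-731313/100000), (149327/100000), (-6313/25000), (1819/50000), (-221/50000), (53/100000), (1/50000), (1/100000)],
  [(-15722/3125), (1998871/25000), (-8931913/25000), (53048979/100000), (-1316962/3125), (23322147/100000), (-9362409/100000), (2939011/100000), (-182307/25000), (148967/100000), (-63/250), (227/6250), (-441/100000), (53/100000), (1/50000), (1/100000)],
  [(-33019/6250), (7781967/100000), (-3522623/10000), (52583247/100000), (-41862423/100000), (23202613/100000), (-1864699/20000), (585809/20000), (-727151/100000), (14861/10000), (-25147/100000), (1813/50000), (-11/2500), (53/100000), (1/50000), (1/100000)],
  [(-138463/25000), (7577249/100000), (-1736729/5000), (52124167/100000), (-2079253/5000), (4616821/20000), (-9284851/100000), (91223/3125), (-145017/20000), (74127/50000), (-5019/20000), (181/5000), (-439/100000), (53/100000), (1/50000), (1/100000)],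
  [(-579551/100000), (1845259/25000), (-34252473/100000), (51671629/100000), (-8262131/20000), (5741653/25000), (-4623237/50000), (727321/25000), (-723029/100000), (147899/100000), (-25043/100000), (3613/100000), (-439/100000), (53/100000), (1/50000), (1/100000)],
  [(-121043/20000), (3596523/50000), (-33779683/100000), (12806381/25000), (-41039167/100000), (182801/800), (-4604181/50000), (289949/10000), (-720983/100000), (73773/50000), (-24991/100000), (3607/100000), (-219/50000), (53/100000), (1/50000), (1/100000)],
  [(-315333/50000), (7013007/100000), (-33315991/100000), (50785743/100000), (-40770559/100000), (2273463/10000), (-4585257/50000), (2889751/100000), (-718947/100000), (73597/50000), (-24939/100000), (3601/100000), (-437/100000), (53/100000), (1/50000), (1/100000)],
  [(-655737/100000), (427541/6250), (-6572237/20000), (2517609/5000), (-40504793/100000), (22620119/100000), (-4566463/50000), (2880069/100000), (-716921/100000), (36711/25000), (-3111/12500), (719/20000), (-109/25000), (53/100000), (1/50000), (1/100000)],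
  [(-680269/100000), (333787/5000), (-32415053/100000), (24962367/50000), (-10060457/25000), (11253291/50000), (-1819119/20000), (2870443/100000), (-89363/12500), (29299/20000), (-24837/100000), (3589/100000), (-87/20000), (53/100000), (1/50000), (1/100000)],
  [(-44007/6250), (1303603/20000), (-31977393/100000), (49503301/100000), (-3998163/10000), (22394007/100000), (-9058521/100000), (357609/12500), (-712897/100000), (36537/25000), (-4957/20000), (3583/100000), (-217/50000), (53/100000), (1/50000), (1/100000)],
  [(-5817/800), (1273449/20000), (-31548007/100000), (49087781/100000), (-19862081/50000), (22282383/100000), (-4510851/50000), (1425677/50000), (-710901/100000), (145801/100000), (-4947/20000), (447/12500), (-217/50000), (53/100000), (1/50000), (1/100000)],
  [(-749171/100000), (1555801/25000), (-15563349/50000), (48678077/100000), (-19734693/50000), (22171703/100000), (-2246283/25000), (2841893/100000), (-708913/100000), (145457/100000), (-6171/25000), (357/10000), (-433/100000), (53/100000), (1/50000), (1/100000)],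
  [(-192531/25000), (6085673/100000), (-30713277/100000), (48274093/100000), (-9804317/25000), (4412391/20000), (-8948813/100000), (566497/20000), (-141387/20000), (72557/50000), (-12317/50000), (891/25000), (-27/6250), (53/100000), (1/50000), (1/100000)],
  [(-789863/100000), (2977221/50000), (-30307559/100000), (47875733/100000), (-38967773/100000), (21953129/100000), (-8912741/100000), (282313/10000), (-704967/100000), (36193/25000), (-24583/100000), (1779/50000), (-431/100000), (53/100000), (1/50000), (1/100000)],
  [(-808271/100000), (5829309/100000), (-14954681/50000), (23741453/50000), (-1210027/3125), (21845217/100000), (-8876913/100000), (2813829/100000), (-21969/3125), (9027/6250), (-24533/100000), (111/3125), (-43/10000), (53/100000), (1/50000), (1/100000)],
  [(-825241/100000), (2855039/50000), (-29518509/100000), (23547761/50000), (-38476509/100000), (21738209/100000), (-8841327/100000), (1402291/50000), (-350529/50000), (144093/100000), (-24483/100000), (1773/50000), (-429/100000), (53/100000), (1/50000), (1/100000)],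
  [(-210167/25000), (5596563/100000), (-7283707/25000), (46713489/100000), (-19117337/50000), (10816047/50000), (-4402991/50000), (2795387/100000), (-699117/100000), (35939/25000), (-24433/100000), (177/5000), (-429/100000), (53/100000), (1/50000), (1/100000)],
  [(-170891/20000), (5488581/100000), (-575163/2000), (46336721/100000), (-18997663/50000), (21526863/100000), (-8770877/100000), (2786243/100000), (-348593/50000), (7171/5000), (-24383/100000), (1767/50000), (-107/25000), (53/100000), (1/50000), (1/100000)],
  [(-173301/20000), (5385961/100000), (-28388309/100000), (11491283/25000), (-1179951/3125), (21422509/100000), (-8736007/100000), (2777151/100000), (-139053/20000), (28617/20000), (-12167/50000), (441/12500), (-427/100000), (53/100000), (1/50000), (1/100000)],
  [(-876733/100000), (5288533/100000), (-14012573/50000), (45598637/100000), (-37523961/100000), (21319019/100000), (-8701373/100000), (276811/10000), (-86669/12500), (4461/3125), (-4857/20000), (1761/50000), (-213/50000), (53/100000), (1/50000), (1/100000)],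
  [(-885047/100000), (2598071/50000), (-27668499/100000), (45237157/100000), (-37291877/100000), (2121639/10000), (-1083371/12500), (2759123/100000), (-345723/50000), (71211/50000), (-12117/50000), (3517/100000), (-17/4000), (53/100000), (1/50000), (1/100000)],
  [(-7131/800), (40869/800), (-27318223/100000), (44880603/100000), (-9265539/25000), (4222921/20000), (-4316399/50000), (1375091/50000), (-344777/50000), (142089/100000), (-24187/100000), (351/10000), (-17/4000), (53/100000), (1/50000), (1/100000)]]"

lemma rep_num: "replicate (numeral n) x = x # replicate (pred_numeral n) x"
  by (simp add: numeral_eq_Suc)

lemma chk_ok: "chk Hr bps certs"
  unfolding Hr_def bps_def certs_def by simp

lemma Gl_le: "ple Gl ([0,0,0,0] @ spread (scl (25/64) Hr))"
  unfolding Gl_def Hr_def tsin_def tcos_def sc_def shl_def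
  by (simp add: upt_rec sin_coeff_def cos_coeff_def fact_numeral rep_num)

lemma Hr_neg: assumes "0 \<le> v" "v \<le> 1" shows "hor Hr v < 0"
proof -
  have "hd bps = 0" "last bps = 1" "certs \<noteq> []" by (simp_all add: bps_def certs_def)
  then show ?thesis using chk_sound[OF chk_ok, of v] assms by simp
qed

lemma neg_small: assumes "0 < u" "u \<le> 8/5" shows "a01 u < 0"
proof -
  have u0: "0 \<le> u" using assms by simp
  have "a01 u \<le> hor Gl u" by (rule a01_le_Gl[OF assms(1)])
  also have "\<dots> \<le> hor ([0,0,0,0] @ spread (scl (25/64) Hr)) u" by (rule ple_sound[OF Gl_le u0])
  also have "\<dots> = u ^ 4 * hor Hr (25/64 * u^2)" by (simp add: hor_spread hor_scl power4_eq_xxxx algebra_simps)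
  also have "\<dots> < 0"
  proof (rule mult_pos_neg)
    show "0 < u ^ 4" using assms by simp
    have "u^2 \<le> (8/5)^2" using assms by (intro power_mono) auto
    then show "hor Hr (25/64 * u^2) < 0" by (intro Hr_neg) (auto simp: power_divide)
  qed
  finally show ?thesis .
qed

lemma alg_sB: fixes u s c d e :: real
  assumes "e = 4*c^3 - 3*c" "s^2 + c^2 = 1"
  shows "64 * u^3 * s + 48 * u^2 * c - 44 * u * s - 4 * u * d * s + 3 * c - 3 * e
     = s * (64*u^3 - 44*u - 4*u*d + 12 * c * s) + 48*u^2 * c"
  using assms by algebra

lemma a01_sB: "a01 u = sin (2*u) * (64*u^3 - 44*u - 4*u*cos u + 12 * cos (2*u) * sin (2*u)) + 48*u^2 * cos (2*u)"
proof -
  have c6: "cos (6*u) = 4 * cos (2*u) ^ 3 - 3 * cos (2*u)"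
    using cos_treble_cos[of "2*u"] by simp
  show ?thesis unfolding a01_def
    by (rule alg_sB[OF c6 sin_cos_squared_add])
qed

lemma B_pos: fixes u :: real assumes "3/2 \<le> u"
  shows "64*u^3 - 48*u - 12 \<le> 64*u^3 - 44*u - 4*u*cos u + 12 * cos (2*u) * sin (2*u)"
    and "0 < 64*u^3 - 48*u - 12"
proof -
  have "u * cos u \<le> u * 1" using assms by (intro mult_left_mono) auto
  moreover have "-1 \<le> cos (2*u) * sin (2*u)"
  proof -
    have "\<bar>cos (2*u) * sin (2*u)\<bar> \<le> 1 * 1" unfolding abs_mult
      by (intro mult_mono) auto
    then show ?thesis by (simp add: abs_le_iff)
  qed
  ultimately show "64*u^3 - 48*u - 12 \<le> 64*u^3 - 44*u - 4*u*cos u + 12 * cos (2*u) * sin (2*u)"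
    by linarith
  have "(3/2)^2 \<le> u^2" using assms by (intro power_mono) auto
  then have "96 \<le> 64*u^2 - 48" by (simp add: power_divide)
  then have "3/2 * 96 \<le> u * (64*u^2 - 48)" using assms by (intro mult_mono) auto
  then show "0 < 64*u^3 - 48*u - 12" by (simp add: algebra_simps power3_eq_cube power2_eq_square)
qed

lemma neg_mid: assumes "pi/2 \<le> u" "u \<le> 5*pi/6" shows "a01 u < 0"
proof -
  have p3: "3 < pi" using pi_gt3 .
  have u32: "3/2 \<le> u" using assms p3 by linarith
  define B where "B = 64*u^3 - 44*u - 4*u*cos u + 12 * cos (2*u) * sin (2*u)"
  have Bge: "64*u^3 - 48*u - 12 \<le> B" and Bp0: "0 < 64*u^3 - 48*u - 12"
    using B_pos[OF u32] unfolding B_def by auto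
  have Bp: "0 < B" using Bge Bp0 by linarith
  have aeq: "a01 u = sin (2*u) * B + 48*u^2 * cos (2*u)" unfolding B_def by (rule a01_sB)
  have sc: "sin (2*u) ^ 2 + cos (2*u) ^ 2 = 1" by simp
  show ?thesis
  proof (cases "u \<le> 3*pi/4")
    case True
    have "0 \<le> sin (2*u - pi)" using assms True by (intro sin_ge_zero) auto
    then have s: "sin (2*u) \<le> 0" by simp
    have "0 \<le> cos (2*u - pi)" using assms True by (intro cos_ge_zero) auto
    then have c: "cos (2*u) \<le> 0" by simp
    have u2: "0 < u^2" using u32 by simp
    show ?thesis
    proof (cases "sin (2*u) = 0")
      case True
      then have "cos (2*u) ^ 2 = 1" using sc by simp
      then have "cos (2*u) = -1" using c by (simp add: power2_eq_1_iff)
      then show ?thesis using aeq True u2 by simp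
    next
      case False
      then have "sin (2*u) * B < 0" using s Bp by (simp add: mult_neg_pos)
      moreover have "48*u^2 * cos (2*u) \<le> 0" using c u2 by (simp add: mult_nonneg_nonpos)
      ultimately show ?thesis using aeq by linarith
    qed
  next
    case False
    define y where "y = 2*pi - 2*u"
    have y1: "pi/3 \<le> y" "y \<le> pi/2" using assms False unfolding y_def by auto
    have sy: "sin (2*u) = - sin y" unfolding y_def by simp
    have cy: "cos (2*u) = cos y" unfolding y_def by simp
    have "0 \<le> sin y" using y1 by (intro sin_ge_zero) (auto simp: p3)
    then have s: "sin (2*u) \<le> 0" using sy by simp
    have "cos y \<le> cos (pi/3)" using y1 by (intro cos_monotone_0_pi_le) auto
    then have c: "cos (2*u) \<le> 1/2" using cy cos_60 by simp
    have c0: "0 \<le> cos (2*u)" using y1 cy by (simp add: cos_ge_zero)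
    have "cos (2*u) ^ 2 \<le> (1/2)^2" using c c0 by (intro power_mono) auto
    moreover have "(1/2::real)^2 = 1/4" by (simp add: power2_eq_square)
    ultimately have s2: "3/4 \<le> sin (2*u) ^ 2" using sc by linarith
    have s45: "sin (2*u) \<le> -4/5"
    proof (rule ccontr)
      assume "\<not> sin (2*u) \<le> -4/5"
      then have "-4/5 < sin (2*u)" by simp
      then have "(- sin (2*u)) ^ 2 < (4/5)^2" using s by (intro power_strict_mono) auto
      then have "sin (2*u) ^ 2 < 16/25" by (simp add: power_divide)
      then show False using s2 by linarith
    qed
    have u94: "9/4 \<le> u" using False p3 by linarith
    have "sin (2*u) * B \<le> -4/5 * B" using s45 Bp by (intro mult_right_mono) auto
    also have "\<dots> \<le> -4/5 * (64*u^3 - 48*u - 12)" using Bge by simp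
    finally have t1: "sin (2*u) * B \<le> -4/5 * (64*u^3 - 48*u - 12)" .
    have t2: "48*u^2 * cos (2*u) \<le> 48*u^2 * (1/2)" using c by (intro mult_left_mono) auto
    have "9/4 * u^2 \<le> u * u^2" using u94 by (intro mult_right_mono) auto
    then have q1: "9/4 * u^2 \<le> u^3" by (simp add: power3_eq_cube power2_eq_square)
    have "9/4 * u \<le> u * u" using u94 by (intro mult_right_mono) auto
    then have q2: "9/4 * u \<le> u^2" by (simp add: power2_eq_square)
    have "-4/5 * (64*u^3 - 48*u - 12) + 48*u^2 * (1/2) = -(256/5) * u^3 + (192/5) * u + 48/5 + 24 * u^2"
      by (simp add: algebra_simps)
    also have "\<dots> < 0" using q1 q2 u94 by linarith
    finally have "-4/5 * (64*u^3 - 48*u - 12) + 48*u^2 * (1/2) < 0" .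
    then show ?thesis using aeq t1 t2 by linarith
  qed
qed

lemma neg_all: assumes "0 < u" "u \<le> 5*pi/6" shows "a01 u < 0"
proof (cases "u \<le> 8/5")
  case True then show ?thesis using neg_small assms by blast
next
  case False
  have "pi < 16/5" using pi_approx(2) by simp
  then have "pi/2 \<le> u" using False by linarith
  then show ?thesis using neg_mid assms by blast
qed

lemma a01_pi: "a01 pi > 0"
proof -
  have "a01 pi = 48 * pi^2" unfolding a01_def by simp
  then show ?thesis by simp
qed

lemma a01_cont: "continuous_on A a01"
proof -
  have "continuous_on A (\<lambda>u. 64 * u^3 * sin (2*u) + 48 * u^2 * cos (2*u) - 44 * u * sin (2*u)
           - 4 * u * cos u * sin (2*u) + 3 * cos (2*u) - 3 * cos (6*u))"
    by (intro continuous_intros)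
  then show ?thesis unfolding a01_def[abs_def] .
qed

theorem lemma5p3:
  shows "first_zero a01 \<in> {3/4*pi<..<pi} \<and> (\<forall>u. 0 < u \<and> u < first_zero a01 \<longrightarrow> a01 u < 0)"
proof -
  define S where "S = {u. u > 0 \<and> a01 u = 0}"
  have fz: "first_zero a01 = Inf S" unfolding first_zero_def S_def ..
  let ?c = "5*pi/6"
  have c0: "0 < ?c" by simp
  have ac: "a01 ?c < 0" using neg_all[of ?c] by simp
  obtain z where z: "?c \<le> z" "z \<le> pi" "a01 z = 0"
    using IVT'[of a01 ?c 0 pi] ac a01_pi a01_cont by force
  have zpi: "z < pi" using z a01_pi by (cases "z = pi") auto
  have "0 < z" using z(1) c0 by linarith
  then have zS: "z \<in> S" unfolding S_def using z by auto
  have bdd: "bdd_below S" unfolding S_def by (rule bdd_belowI[of _ 0]) auto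
  have lowS: "\<And>x. x \<in> S \<Longrightarrow> ?c \<le> x"
  proof -
    fix x assume "x \<in> S"
    then have "0 < x" "a01 x = 0" unfolding S_def by auto
    then show "?c \<le> x" using neg_all[of x] by force
  qed
  have I1: "Inf S \<le> z" by (rule cInf_lower[OF zS bdd])
  have I2: "?c \<le> Inf S" using zS lowS by (intro cInf_greatest) auto
  have part1: "Inf S \<in> {3/4*pi<..<pi}" using I1 I2 zpi by auto
  have part2: "a01 u < 0" if u: "0 < u" "u < Inf S" for u
  proof (cases "u \<le> ?c")
    case True then show ?thesis using neg_all u by blast
  next
    case False
    show ?thesis
    proof (rule ccontr)
      assume "\<not> a01 u < 0"
      then have "0 \<le> a01 u" by simp
      then obtain x where x: "?c \<le> x" "x \<le> u" "a01 x = 0"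
        using IVT'[of a01 ?c 0 u] ac a01_cont False by force
      have "0 < x" using x(1) c0 by linarith
      then have "x \<in> S" unfolding S_def using x by auto
      then have "Inf S \<le> x" by (rule cInf_lower[OF _ bdd])
      then show False using x u by linarith
    qed
  qed
  show ?thesis unfolding fz using part1 part2 by blast
qed

end
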